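(* Let $d_1\ge1$, $d_2\ge2$, and for $y_1\in\mathbb{R}$ let $\Phi_{y_1}$ denote the solution map $(u_0,u_1)\mapsto(u(\cdot,y_1,\cdot),\partial_{y_1}u(\cdot,y_1,\cdot))$ of the Cauchy problem $\partial_{y_1}^2u=\Delta_xu-\Delta_{y'}u$, $u|_{y_1=0}=u_0$, $\partial_{y_1}u|_{y_1=0}=u_1$, given on the Fourier side (see context). Let $\Phi^S_{y_1}$ be its restriction to $X^S$ for $y_1\ge0$, $\Phi^U_{y_1}$ its restriction to $X^U$ for $y_1\le0$, and $\Phi^C_{y_1}$ its restriction to $X^C$. Then for all $u,v\in X^S$ and $y_1\ge0$, $$\|\Phi^S_{y_1}(u)-\Phi^S_{y_1}(v)\|_X^2\le\|u-v\|_X^2,$$ and for all $u,v\in X^U$ and $y_1\le0$, $$\|\Phi^U_{y_1}(u)-\Phi^U_{y_1}(v)\|_X^2\le\|u-v\|_X^2.$$ For $u\in X^C$, $\Phi^C_{y_1}=\Phi^S_{y_1}$ for $y_1\ge0$ and $\Phi^C_{y_1}=\Phi^U_{y_1}$ for $y_1\le0$, and equality holds in both estimates.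
   Context: Coordinates $(x,y_1,y')\in\mathbb{R}^{d_1}\times\mathbb{R}\times\mathbb{R}^{d_2-1}$; Fourier transform in $(x,y')$ with dual variables $(\xi,\eta')$. $\omega=\sqrt{|\xi|^2-|\eta'|^2}$ on $\{|\eta'|\le|\xi|\}$, $\lambda=\sqrt{|\eta'|^2-|\xi|^2}$ on $\{|\xi|\le|\eta'|\}$. The solution map acts on the Fourier side by the matrix $\begin{pmatrix}\cos(\omega y_1)&\sin(\omega y_1)/\omega\\-\omega\sin(\omega y_1)&\cos(\omega y_1)\end{pmatrix}$ on $\{|\eta'|\le|\xi|\}$ and $\begin{pmatrix}\cosh(\lambda y_1)&\sinh(\lambda y_1)/\lambda\\ \lambda\sinh(\lambda y_1)&\cosh(\lambda y_1)\end{pmatrix}$ on $\{|\xi|<|\eta'|\}$. The space $X$ consists of pairs $v=(v_0,v_1)$ with $\|v\|_X^2=\iint_{\{|\eta'|<|\xi|\}}\omega^2|\hat v_0|^2+\iint_{\{|\xi|\le|\eta'|\}}\lambda^2|\hat v_0|^2+\iint|\hat v_1|^2<\infty$. $X^S=\{v\in X:\hat v_0+\hat v_1/\lambda=0\text{ for }|\xi|<|\eta'|\}$, $X^U=\{v\in X:\hat v_0-\hat v_1/\lambda=0\text{ for }|\xi|<|\eta'|\}$, $X^C=\{v\in X:\mathrm{supp}(\hat v_0,\hat v_1)\subseteq\{|\xi|\ge|\eta'|\}\}=X^S\cap X^U$. *)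

theory Defs
  imports "HOL-Analysis.Analysis"
begin

text \<open>Everything is expressed on the Fourier side. The frequency variable is
  z = (xi, eta') with xi in 'a (dimension d1) and eta' in 'b (dimension d2 - 1).
  A pair v = (v0, v1) stands for the pair of Fourier transforms (hat v0, hat v1).\<close>

type_synonym ('a, 'b) fpair = "('a \<times> 'b \<Rightarrow> complex) \<times> ('a \<times> 'b \<Rightarrow> complex)"

definition omega :: "'a::euclidean_space \<times> 'b::euclidean_space \<Rightarrow> real" where
  "omega z = sqrt ((norm (fst z))\<^sup>2 - (norm (snd z))\<^sup>2)"

definition lam :: "'a::euclidean_space \<times> 'b::euclidean_space \<Rightarrow> real" where
  "lam z = sqrt ((norm (snd z))\<^sup>2 - (norm (fst z))\<^sup>2)"

definition sin_over :: "real \<Rightarrow> real \<Rightarrow> real" where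
  "sin_over w t = (if w = 0 then t else sin (w * t) / w)"

definition sinh_over :: "real \<Rightarrow> real \<Rightarrow> real" where
  "sinh_over l t = (if l = 0 then t else sinh (l * t) / l)"

definition Phi :: "real \<Rightarrow> ('a::euclidean_space, 'b::euclidean_space) fpair \<Rightarrow> ('a, 'b) fpair" where
  "Phi y1 v =
     ((\<lambda>z. if norm (snd z) \<le> norm (fst z)
           then complex_of_real (cos (omega z * y1)) * fst v z
                + complex_of_real (sin_over (omega z) y1) * snd v z
           else complex_of_real (cosh (lam z * y1)) * fst v z
                + complex_of_real (sinh_over (lam z) y1) * snd v z),
      (\<lambda>z. if norm (snd z) \<le> norm (fst z)
           then complex_of_real (- omega z * sin (omega z * y1)) * fst v z
                + complex_of_real (cos (omega z * y1)) * snd v z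
           else complex_of_real (lam z * sinh (lam z * y1)) * fst v z
                + complex_of_real (cosh (lam z * y1)) * snd v z))"

definition normX_sq :: "('a::euclidean_space, 'b::euclidean_space) fpair \<Rightarrow> ennreal" where
  "normX_sq v =
     (\<integral>\<^sup>+ z. ennreal (indicator {z. norm (snd z) < norm (fst z)} z * (omega z)\<^sup>2 * (cmod (fst v z))\<^sup>2) \<partial>lborel)
   + (\<integral>\<^sup>+ z. ennreal (indicator {z. norm (fst z) \<le> norm (snd z)} z * (lam z)\<^sup>2 * (cmod (fst v z))\<^sup>2) \<partial>lborel)
   + (\<integral>\<^sup>+ z. ennreal ((cmod (snd v z))\<^sup>2) \<partial>lborel)"

definition spaceX :: "('a::euclidean_space, 'b::euclidean_space) fpair set" where
  "spaceX = {v. fst v \<in> borel_measurable lborel \<and> snd v \<in> borel_measurable lborel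
                \<and> normX_sq v < \<infinity>}"

definition spaceXS :: "('a::euclidean_space, 'b::euclidean_space) fpair set" where
  "spaceXS = {v \<in> spaceX. AE z in lborel. norm (fst z) < norm (snd z) \<longrightarrow>
                 fst v z + snd v z / complex_of_real (lam z) = 0}"

definition spaceXU :: "('a::euclidean_space, 'b::euclidean_space) fpair set" where
  "spaceXU = {v \<in> spaceX. AE z in lborel. norm (fst z) < norm (snd z) \<longrightarrow>
                 fst v z - snd v z / complex_of_real (lam z) = 0}"

definition spaceXC :: "('a::euclidean_space, 'b::euclidean_space) fpair set" where
  "spaceXC = {v \<in> spaceX. AE z in lborel. norm (fst z) < norm (snd z) \<longrightarrow>
                 fst v z = 0 \<and> snd v z = 0}"

definition pdiff :: "('a, 'b) fpair \<Rightarrow> ('a, 'b) fpair \<Rightarrow> ('a, 'b) fpair" where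
  "pdiff u v = ((\<lambda>z. fst u z - fst v z), (\<lambda>z. snd u z - snd v z))"

end

theory Submission imports Defs begin

lemma cont_omega: "continuous_on UNIV (omega :: ('a::euclidean_space \<times> 'b::euclidean_space) \<Rightarrow> real)"
  unfolding omega_def by (intro continuous_intros)
lemma cont_lam: "continuous_on UNIV (lam :: ('a::euclidean_space \<times> 'b::euclidean_space) \<Rightarrow> real)"
  unfolding lam_def by (intro continuous_intros)
lemma meas_omega[measurable]: "omega \<in> borel_measurable (lborel :: ('a::euclidean_space \<times> 'b::euclidean_space) measure)"
  using borel_measurable_continuous_onI[OF cont_omega] by simp
lemma meas_lam[measurable]: "lam \<in> borel_measurable (lborel :: ('a::euclidean_space \<times> 'b::euclidean_space) measure)"
  using borel_measurable_continuous_onI[OF cont_lam] by simp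
lemma meas_n1[measurable]: "(\<lambda>z. norm (fst z)) \<in> borel_measurable (lborel :: ('a::euclidean_space \<times> 'b::euclidean_space) measure)"
  using borel_measurable_continuous_onI[of "\<lambda>z::('a \<times> 'b). norm (fst z)"] by (simp add: continuous_intros)
lemma meas_n2[measurable]: "(\<lambda>z. norm (snd z)) \<in> borel_measurable (lborel :: ('a::euclidean_space \<times> 'b::euclidean_space) measure)"
  using borel_measurable_continuous_onI[of "\<lambda>z::('a \<times> 'b). norm (snd z)"] by (simp add: continuous_intros)

lemma meas_Phi:
  fixes w :: "('a::euclidean_space, 'b::euclidean_space) fpair"
  assumes [measurable]: "fst w \<in> borel_measurable lborel" "snd w \<in> borel_measurable lborel"
  shows "fst (Phi y1 w) \<in> borel_measurable lborel" "snd (Phi y1 w) \<in> borel_measurable lborel"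
proof -
  have [measurable]: "(\<lambda>z. sin_over (omega z) y1) \<in> borel_measurable (lborel :: ('a \<times> 'b) measure)"
    unfolding sin_over_def by measurable
  have ml[measurable]: "lam \<in> borel_measurable (lborel :: ('a \<times> 'b) measure)" by (rule meas_lam)
  have "continuous_on UNIV (\<lambda>z::'a\<times>'b. sinh (lam z * y1))"
    by (intro continuous_intros cont_lam)
  then have [measurable]: "(\<lambda>z. sinh (lam z * y1)) \<in> borel_measurable (lborel :: ('a \<times> 'b) measure)"
    using borel_measurable_continuous_onI by simp
  have "continuous_on UNIV (\<lambda>z::'a\<times>'b. cosh (lam z * y1))"
    by (intro continuous_intros cont_lam)
  then have [measurable]: "(\<lambda>z. cosh (lam z * y1)) \<in> borel_measurable (lborel :: ('a \<times> 'b) measure)"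
    using borel_measurable_continuous_onI by simp
  have [measurable]: "(\<lambda>z. sinh_over (lam z) y1) \<in> borel_measurable (lborel :: ('a \<times> 'b) measure)"
    unfolding sinh_over_def by measurable
  show "fst (Phi y1 w) \<in> borel_measurable lborel" "snd (Phi y1 w) \<in> borel_measurable lborel"
    unfolding Phi_def fst_conv snd_conv by measurable
qed

lemma rot:
  fixes p q :: complex and w cc ss :: real
  assumes "cc\<^sup>2 + ss\<^sup>2 = 1" "w \<noteq> 0"
  shows "w\<^sup>2 * (cmod (of_real cc * p + of_real (ss / w) * q))\<^sup>2 + (cmod (of_real (- w * ss) * p + of_real cc * q))\<^sup>2
       = w\<^sup>2 * (cmod p)\<^sup>2 + (cmod q)\<^sup>2"
proof -
  have e: "w\<^sup>2 * (cmod (of_real cc * p + of_real (ss / w) * q))\<^sup>2 = (cmod (of_real (w*cc) * p + of_real ss * q))\<^sup>2"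
  proof -
    have "of_real (w*cc) * p + of_real ss * q = of_real w * (of_real cc * p + of_real (ss / w) * q)"
      using assms(2) by (simp add: field_simps)
    then show ?thesis by (simp add: norm_mult power_mult_distrib)
  qed
  obtain p1 p2 q1 q2 where pq: "p = Complex p1 p2" "q = Complex q1 q2"
    by (metis complex.exhaust)
  have "(w * cc * p1 + ss * q1)\<^sup>2 + (w * cc * p2 + ss * q2)\<^sup>2 + ((- w * ss) * p1 + cc * q1)\<^sup>2 + ((- w * ss) * p2 + cc * q2)\<^sup>2
     - (w\<^sup>2 * (p1\<^sup>2 + p2\<^sup>2) + (q1\<^sup>2 + q2\<^sup>2)) = (cc\<^sup>2 + ss\<^sup>2 - 1) * (w\<^sup>2 * (p1\<^sup>2 + p2\<^sup>2) + (q1\<^sup>2 + q2\<^sup>2))"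
    by (simp add: power2_eq_square algebra_simps)
  then show ?thesis unfolding e unfolding pq using assms(1)
    by (simp add: cmod_power2 power_mult_distrib algebra_simps)
qed

definition R :: "('a::euclidean_space, 'b::euclidean_space) fpair \<Rightarrow> 'a \<times> 'b \<Rightarrow> real" where
  "R v z = indicator {z. norm (snd z) < norm (fst z)} z * (omega z)\<^sup>2 * (cmod (fst v z))\<^sup>2
         + indicator {z. norm (fst z) \<le> norm (snd z)} z * (lam z)\<^sup>2 * (cmod (fst v z))\<^sup>2
         + (cmod (snd v z))\<^sup>2"

lemma normX_eq:
  fixes v :: "('a::euclidean_space, 'b::euclidean_space) fpair"
  assumes [measurable]: "fst v \<in> borel_measurable lborel" "snd v \<in> borel_measurable lborel"
  shows "normX_sq v = (\<integral>\<^sup>+ z. ennreal (R v z) \<partial>lborel)"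
proof -
  have "(\<integral>\<^sup>+ z. ennreal (R v z) \<partial>lborel) =
     (\<integral>\<^sup>+ z. ennreal (indicator {z. norm (snd z) < norm (fst z)} z * (omega z)\<^sup>2 * (cmod (fst v z))\<^sup>2)
       + ennreal (indicator {z. norm (fst z) \<le> norm (snd z)} z * (lam z)\<^sup>2 * (cmod (fst v z))\<^sup>2)
       + ennreal ((cmod (snd v z))\<^sup>2) \<partial>lborel)"
    unfolding R_def by (intro nn_integral_cong) (simp add: ennreal_plus)
  also have "\<dots> = normX_sq v"
  proof -
    have i1: "{z::'a\<times>'b. norm (snd z) < norm (fst z)} \<in> sets lborel" by measurable
    have i2: "{z::'a\<times>'b. norm (fst z) \<le> norm (snd z)} \<in> sets lborel" by measurable
    have m1: "(\<lambda>z. ennreal (indicator {z. norm (snd z) < norm (fst z)} z * (omega z)\<^sup>2 * (cmod (fst v z))\<^sup>2)) \<in> borel_measurable lborel"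
      using i1 by measurable
    have m2: "(\<lambda>z. ennreal (indicator {z. norm (fst z) \<le> norm (snd z)} z * (lam z)\<^sup>2 * (cmod (fst v z))\<^sup>2)) \<in> borel_measurable lborel"
      using i2 by measurable
    have m3: "(\<lambda>z. ennreal ((cmod (snd v z))\<^sup>2)) \<in> borel_measurable lborel"
      by measurable
    show ?thesis unfolding normX_sq_def
      using nn_integral_add[OF borel_measurable_add[OF m1 m2] m3] nn_integral_add[OF m1 m2]
      by simp
  qed
  finally show ?thesis ..
qed

lemma pdiff_Phi: "pdiff (Phi y u) (Phi y v) = Phi y (pdiff u v)"
  unfolding Phi_def pdiff_def by (auto simp: algebra_simps fun_eq_iff)

lemma R_osc:
  fixes z :: "'a::euclidean_space \<times> 'b::euclidean_space"
  assumes "norm (snd z) < norm (fst z)"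
  shows "R (Phi y w) z = R w z"
proof -
  have "omega z > 0" using assms unfolding omega_def
    by (simp add: power_strict_mono)
  then have "omega z \<noteq> 0" by simp
  then show ?thesis using assms rot[OF sin_cos_squared_add2 \<open>omega z \<noteq> 0\<close>, of "omega z * y" "fst w z" "snd w z"]
    unfolding R_def Phi_def sin_over_def by (simp add: indicator_def)
qed

lemma R_bd:
  fixes z :: "'a::euclidean_space \<times> 'b::euclidean_space"
  assumes "norm (snd z) = norm (fst z)"
  shows "R (Phi y w) z = R w z"
  using assms unfolding R_def Phi_def omega_def lam_def by (simp add: indicator_def)

lemma cosh_sinh1: "cosh x - sinh x = exp (- x)" for x :: real
  by (simp add: cosh_def sinh_def field_simps)
lemma cosh_sinh2: "cosh x + sinh x = exp x" for x :: real
  by (simp add: cosh_def sinh_def field_simps)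

lemma R_hyp:
  fixes z :: "'a::euclidean_space \<times> 'b::euclidean_space"
  assumes "norm (fst z) < norm (snd z)" and "snd w z = of_real (sg * lam z) * fst w z"
    and "sg = 1 \<or> sg = -1" and "sg * y \<le> 0"
  shows "R (Phi y w) z \<le> R w z"
proof -
  let ?l = "lam z" and ?a = "fst w z"
  have lp: "?l > 0" using assms(1) unfolding lam_def by (simp add: power_strict_mono)
  define E where "E = exp (sg * ?l * y)"
  have "sg * ?l * y = ?l * (sg * y)" by simp
  also have "\<dots> \<le> 0" using lp assms(4) by (simp add: mult_nonneg_nonpos)
  finally have E1: "E \<le> 1" "E > 0" unfolding E_def by auto
  have ee: "cosh (?l * y) + sg * sinh (?l * y) = E"
    using assms(3) unfolding E_def by (auto simp: cosh_sinh1[symmetric] cosh_sinh2[symmetric])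
  have f: "fst (Phi y w) z = of_real E * ?a"
  proof -
    have "fst (Phi y w) z = of_real (cosh (?l * y)) * ?a + of_real (sinh (?l * y) / ?l) * (of_real (sg * ?l) * ?a)"
      using assms(1,2) lp unfolding Phi_def sinh_over_def by simp
    also have "\<dots> = of_real (cosh (?l * y) + sg * sinh (?l * y)) * ?a"
      using lp by (simp add: field_simps)
    finally show ?thesis using ee by simp
  qed
  have g: "snd (Phi y w) z = of_real (sg * ?l * E) * ?a"
  proof -
    have "snd (Phi y w) z = of_real (?l * sinh (?l * y)) * ?a + of_real (cosh (?l * y)) * (of_real (sg * ?l) * ?a)"
      using assms(1,2) lp unfolding Phi_def by simp
    also have "\<dots> = of_real (sg * ?l * (cosh (?l * y) + sg * sinh (?l * y))) * ?a"
      using assms(3) by (auto simp: field_simps)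
    finally show ?thesis using ee by simp
  qed
  have sg2: "sg\<^sup>2 = 1" using assms(3) by auto
  have "E\<^sup>2 \<le> 1" using E1 by (simp add: power_le_one)
  then have "?l\<^sup>2 * (cmod ?a)\<^sup>2 * E\<^sup>2 \<le> ?l\<^sup>2 * (cmod ?a)\<^sup>2 * 1"
    by (intro mult_left_mono) auto
  moreover have "R (Phi y w) z = ?l\<^sup>2 * (cmod ?a)\<^sup>2 * E\<^sup>2 + ?l\<^sup>2 * (cmod ?a)\<^sup>2 * E\<^sup>2"
    using assms(1) sg2 unfolding R_def f g
    by (simp add: indicator_def norm_mult power_mult_distrib)
  moreover have "R w z = ?l\<^sup>2 * (cmod ?a)\<^sup>2 * 1 + ?l\<^sup>2 * (cmod ?a)\<^sup>2 * 1"
    using assms(1,2) sg2 unfolding R_def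
    by (simp add: indicator_def norm_mult power_mult_distrib)
  ultimately show ?thesis by linarith
qed

lemma R_zero:
  fixes z :: "'a::euclidean_space \<times> 'b::euclidean_space"
  assumes "norm (fst z) < norm (snd z)" and "fst w z = 0" "snd w z = 0"
  shows "R (Phi y w) z = R w z"
  using assms unfolding R_def Phi_def by (simp add: indicator_def)


lemma lam_pos: "norm (fst z) < norm (snd z) \<Longrightarrow> lam z > 0"
  unfolding lam_def by (simp add: power_strict_mono)

lemma pt_S:
  fixes z :: "'a::euclidean_space \<times> 'b::euclidean_space"
  assumes "norm (fst z) < norm (snd z) \<longrightarrow> fst w z + snd w z / complex_of_real (lam z) = 0" "y \<ge> 0"
  shows "R (Phi y w) z \<le> R w z"
proof (cases "norm (fst z) < norm (snd z)")
  case True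
  have "lam z > 0" using lam_pos[OF True] .
  then have "snd w z = of_real (-1 * lam z) * fst w z"
    using assms(1) True by (simp add: field_simps add_eq_0_iff)
  then show ?thesis using R_hyp[OF True, of w "-1" y] assms(2) by simp
next
  case False
  then show ?thesis using R_osc[of z y w] R_bd[of z y w] by (cases "norm (snd z) < norm (fst z)") auto
qed

lemma pt_U:
  fixes z :: "'a::euclidean_space \<times> 'b::euclidean_space"
  assumes "norm (fst z) < norm (snd z) \<longrightarrow> fst w z - snd w z / complex_of_real (lam z) = 0" "y \<le> 0"
  shows "R (Phi y w) z \<le> R w z"
proof (cases "norm (fst z) < norm (snd z)")
  case True
  have "lam z > 0" using lam_pos[OF True] .
  then have "snd w z = of_real (1 * lam z) * fst w z"
    using assms(1) True by (simp add: field_simps)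
  then show ?thesis using R_hyp[OF True, of w "1" y] assms(2) by simp
next
  case False
  then show ?thesis using R_osc[of z y w] R_bd[of z y w] by (cases "norm (snd z) < norm (fst z)") auto
qed

lemma pt_C:
  fixes z :: "'a::euclidean_space \<times> 'b::euclidean_space"
  assumes "norm (fst z) < norm (snd z) \<longrightarrow> fst w z = 0 \<and> snd w z = 0"
  shows "R (Phi y w) z = R w z"
proof (cases "norm (fst z) < norm (snd z)")
  case True
  then show ?thesis using assms R_zero[OF True] by auto
next
  case False
  then show ?thesis using R_osc[of z y w] R_bd[of z y w] by (cases "norm (snd z) < norm (fst z)") auto
qed

lemma meas_pdiff:
  assumes "u \<in> spaceX" "v \<in> spaceX"
  shows "fst (pdiff u v) \<in> borel_measurable lborel" "snd (pdiff u v) \<in> borel_measurable lborel"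
  using assms unfolding spaceX_def pdiff_def by auto

theorem theorem3:
  shows "(\<forall>u \<in> (spaceXS :: ('a::euclidean_space, 'b::euclidean_space) fpair set). \<forall>v \<in> spaceXS. \<forall>y1::real. y1 \<ge> 0 \<longrightarrow>
            normX_sq (pdiff (Phi y1 u) (Phi y1 v)) \<le> normX_sq (pdiff u v))
       \<and> (\<forall>u \<in> (spaceXU :: ('a, 'b) fpair set). \<forall>v \<in> spaceXU. \<forall>y1::real. y1 \<le> 0 \<longrightarrow>
            normX_sq (pdiff (Phi y1 u) (Phi y1 v)) \<le> normX_sq (pdiff u v))
       \<and> (spaceXC :: ('a, 'b) fpair set) \<subseteq> spaceXS
       \<and> (spaceXC :: ('a, 'b) fpair set) \<subseteq> spaceXU
       \<and> (\<forall>u \<in> (spaceXC :: ('a, 'b) fpair set). \<forall>v \<in> spaceXC. \<forall>y1::real.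
            normX_sq (pdiff (Phi y1 u) (Phi y1 v)) = normX_sq (pdiff u v))"
proof (intro conjI ballI allI impI)
  fix u v :: "('a, 'b) fpair" and y1 :: real
  assume u: "u \<in> spaceXS" and v: "v \<in> spaceXS" and y: "y1 \<ge> 0"
  let ?w = "pdiff u v"
  have X: "u \<in> spaceX" "v \<in> spaceX" using u v unfolding spaceXS_def by auto
  note m = meas_pdiff[OF X]
  have AE: "AE z in lborel. norm (fst z) < norm (snd z) \<longrightarrow> fst ?w z + snd ?w z / complex_of_real (lam z) = 0"
  proof -
    have a1: "AE z in lborel. norm (fst z) < norm (snd z) \<longrightarrow> fst u z + snd u z / complex_of_real (lam z) = 0"
      using u unfolding spaceXS_def by simp
    have a2: "AE z in lborel. norm (fst z) < norm (snd z) \<longrightarrow> fst v z + snd v z / complex_of_real (lam z) = 0"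
      using v unfolding spaceXS_def by simp
    show ?thesis using a1 a2
    proof eventually_elim
      case (elim z)
      have "fst ?w z + snd ?w z / complex_of_real (lam z) = (fst u z + snd u z / complex_of_real (lam z)) - (fst v z + snd v z / complex_of_real (lam z))"
        unfolding pdiff_def by (simp add: diff_divide_distrib algebra_simps)
      then show ?case using elim by simp
    qed
  qed
  have "normX_sq (pdiff (Phi y1 u) (Phi y1 v)) = (\<integral>\<^sup>+ z. ennreal (R (Phi y1 ?w) z) \<partial>lborel)"
    unfolding pdiff_Phi using meas_Phi[OF m] by (rule normX_eq)
  also have "\<dots> \<le> (\<integral>\<^sup>+ z. ennreal (R ?w z) \<partial>lborel)"
    using AE by (intro nn_integral_mono_AE, eventually_elim) (intro ennreal_leI pt_S y)
  also have "\<dots> = normX_sq ?w" using normX_eq[OF m] by simp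
  finally show "normX_sq (pdiff (Phi y1 u) (Phi y1 v)) \<le> normX_sq (pdiff u v)" .
next
  fix u v :: "('a, 'b) fpair" and y1 :: real
  assume u: "u \<in> spaceXU" and v: "v \<in> spaceXU" and y: "y1 \<le> 0"
  let ?w = "pdiff u v"
  have X: "u \<in> spaceX" "v \<in> spaceX" using u v unfolding spaceXU_def by auto
  note m = meas_pdiff[OF X]
  have AE: "AE z in lborel. norm (fst z) < norm (snd z) \<longrightarrow> fst ?w z - snd ?w z / complex_of_real (lam z) = 0"
  proof -
    have a1: "AE z in lborel. norm (fst z) < norm (snd z) \<longrightarrow> fst u z - snd u z / complex_of_real (lam z) = 0"
      using u unfolding spaceXU_def by simp
    have a2: "AE z in lborel. norm (fst z) < norm (snd z) \<longrightarrow> fst v z - snd v z / complex_of_real (lam z) = 0"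
      using v unfolding spaceXU_def by simp
    show ?thesis using a1 a2
    proof eventually_elim
      case (elim z)
      have "fst ?w z - snd ?w z / complex_of_real (lam z) = (fst u z - snd u z / complex_of_real (lam z)) - (fst v z - snd v z / complex_of_real (lam z))"
        unfolding pdiff_def by (simp add: diff_divide_distrib algebra_simps)
      then show ?case using elim by simp
    qed
  qed
  have "normX_sq (pdiff (Phi y1 u) (Phi y1 v)) = (\<integral>\<^sup>+ z. ennreal (R (Phi y1 ?w) z) \<partial>lborel)"
    unfolding pdiff_Phi using meas_Phi[OF m] by (rule normX_eq)
  also have "\<dots> \<le> (\<integral>\<^sup>+ z. ennreal (R ?w z) \<partial>lborel)"
    using AE by (intro nn_integral_mono_AE, eventually_elim) (intro ennreal_leI pt_U y)
  also have "\<dots> = normX_sq ?w" using normX_eq[OF m] by simp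
  finally show "normX_sq (pdiff (Phi y1 u) (Phi y1 v)) \<le> normX_sq (pdiff u v)" .
next
  show "(spaceXC :: ('a, 'b) fpair set) \<subseteq> spaceXS"
  proof
    fix x :: "('a, 'b) fpair" assume "x \<in> spaceXC"
    then have "x \<in> spaceX" "AE z in lborel. norm (fst z) < norm (snd z) \<longrightarrow> fst x z = 0 \<and> snd x z = 0"
      unfolding spaceXC_def by auto
    moreover from this(2) have "AE z in lborel. norm (fst z) < norm (snd z) \<longrightarrow> fst x z + snd x z / complex_of_real (lam z) = 0"
      by eventually_elim simp
    ultimately show "x \<in> spaceXS" unfolding spaceXS_def by simp
  qed
next
  show "(spaceXC :: ('a, 'b) fpair set) \<subseteq> spaceXU"
  proof
    fix x :: "('a, 'b) fpair" assume "x \<in> spaceXC"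
    then have "x \<in> spaceX" "AE z in lborel. norm (fst z) < norm (snd z) \<longrightarrow> fst x z = 0 \<and> snd x z = 0"
      unfolding spaceXC_def by auto
    moreover from this(2) have "AE z in lborel. norm (fst z) < norm (snd z) \<longrightarrow> fst x z - snd x z / complex_of_real (lam z) = 0"
      by eventually_elim simp
    ultimately show "x \<in> spaceXU" unfolding spaceXU_def by simp
  qed
next
  fix u v :: "('a, 'b) fpair" and y1 :: real
  assume u: "u \<in> spaceXC" and v: "v \<in> spaceXC"
  let ?w = "pdiff u v"
  have X: "u \<in> spaceX" "v \<in> spaceX" using u v unfolding spaceXC_def by auto
  note m = meas_pdiff[OF X]
  have AE: "AE z in lborel. norm (fst z) < norm (snd z) \<longrightarrow> fst ?w z = 0 \<and> snd ?w z = 0"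
  proof -
    have a1: "AE z in lborel. norm (fst z) < norm (snd z) \<longrightarrow> fst u z = 0 \<and> snd u z = 0"
      using u unfolding spaceXC_def by simp
    have a2: "AE z in lborel. norm (fst z) < norm (snd z) \<longrightarrow> fst v z = 0 \<and> snd v z = 0"
      using v unfolding spaceXC_def by simp
    show ?thesis using a1 a2 by eventually_elim (simp add: pdiff_def)
  qed
  have "normX_sq (pdiff (Phi y1 u) (Phi y1 v)) = (\<integral>\<^sup>+ z. ennreal (R (Phi y1 ?w) z) \<partial>lborel)"
    unfolding pdiff_Phi using meas_Phi[OF m] by (rule normX_eq)
  also have "\<dots> = (\<integral>\<^sup>+ z. ennreal (R ?w z) \<partial>lborel)"
    using AE by (intro nn_integral_cong_AE, eventually_elim) (simp add: pt_C)
  also have "\<dots> = normX_sq ?w" using normX_eq[OF m] by simp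
  finally show "normX_sq (pdiff (Phi y1 u) (Phi y1 v)) = normX_sq (pdiff u v)" .
qed

end
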